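(* Let $(A,\to,1)$ be any algebra of type $(2,0)$. Then (i) if $(A,\to,1)$ satisfies (M) and (BB), it satisfies (B); (ii) if $(A,\to,1)$ satisfies (M) and (B), it satisfies ( ** ).
   Context: Properties, required for all $x,y,z\in A$: (M) $1\to x=x$; (B) $(y\to z)\to((x\to y)\to(x\to z))=1$; (BB) $(y\to z)\to((z\to x)\to(y\to x))=1$; ( ** ) $y\to z=1$ implies $(z\to x)\to(y\to x)=1$. *)

theory Defs
  imports Main
begin

text \<open>An algebra (A, imp, one) of type (2,0): carrier is the whole type 'a.\<close>

definition prop_M :: "('a \<Rightarrow> 'a \<Rightarrow> 'a) \<Rightarrow> 'a \<Rightarrow> bool" where
  "prop_M imp one \<longleftrightarrow> (\<forall>x. imp one x = x)"

definition prop_B :: "('a \<Rightarrow> 'a \<Rightarrow> 'a) \<Rightarrow> 'a \<Rightarrow> bool" where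
  "prop_B imp one \<longleftrightarrow>
     (\<forall>x y z. imp (imp y z) (imp (imp x y) (imp x z)) = one)"

definition prop_BB :: "('a \<Rightarrow> 'a \<Rightarrow> 'a) \<Rightarrow> 'a \<Rightarrow> bool" where
  "prop_BB imp one \<longleftrightarrow>
     (\<forall>x y z. imp (imp y z) (imp (imp z x) (imp y x)) = one)"

definition prop_star2 :: "('a \<Rightarrow> 'a \<Rightarrow> 'a) \<Rightarrow> 'a \<Rightarrow> bool" where
  "prop_star2 imp one \<longleftrightarrow>
     (\<forall>x y z. imp y z = one \<longrightarrow> imp (imp z x) (imp y x) = one)"

end

theory Submission
  imports Defs
begin

theorem theorem2p6:
  fixes imp :: "'a \<Rightarrow> 'a \<Rightarrow> 'a" and one :: 'a
  shows "(prop_M imp one \<and> prop_BB imp one \<longrightarrow> prop_B imp one) \<and>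
         (prop_M imp one \<and> prop_B imp one \<longrightarrow> prop_star2 imp one)"
proof (intro conjI impI)
  assume h: "prop_M imp one \<and> prop_BB imp one"
  have M: "\<And>x. imp one x = x" using h by (simp add: prop_M_def)
  have BB: "\<And>x y z. imp (imp y z) (imp (imp z x) (imp y x)) = one"
    using h by (simp add: prop_BB_def)
  have tr: "imp a c = one" if "imp a b = one" "imp b c = one" for a b c
    using BB[of a b c] that M by metis
  have C: "imp z (imp (imp z x) x) = one" for z x
    using BB[of one z x] M by metis
  have ex: "imp q (imp p r) = one" if "imp p (imp q r) = one" for p q r
  proof -
    have "imp (imp (imp q r) r) (imp p r) = one"
      using BB[of p "imp q r" r] that M by metis
    then show ?thesis using tr C by blast
  qed
  show "prop_B imp one" unfolding prop_B_def
  proof (intro allI)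
    fix x y z
    show "imp (imp y z) (imp (imp x y) (imp x z)) = one"
      using ex[OF BB[of x y z]] .
  qed
next
  assume h: "prop_M imp one \<and> prop_B imp one"
  have M: "\<And>x. imp one x = x" using h by (simp add: prop_M_def)
  have B: "\<And>x y z. imp (imp y z) (imp (imp x y) (imp x z)) = one"
    using h by (simp add: prop_B_def)
  show "prop_star2 imp one" unfolding prop_star2_def
  proof (intro allI impI)
    fix x y z
    assume "imp y z = one"
    then show "imp (imp z x) (imp y x) = one" using B[of z x y] M by metis
  qed
qed

end
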